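(* Suppose $\mathbb{S}$ has more than one element. Then for all $x\in\mathbb{S}$ and $\lambda\ge1$: $\pi(\{x\})<P_\lambda(x,\{x\})\le\pi(\{x\})+(1-\pi(\{x\}))\frac{2\hat w}{2\hat w+\lambda-1}$, $\int_{\mathbb{S}}\pi(\{y\})\pi(dy)<\int_{\mathbb{S}}P_\lambda(y,\{y\})\pi(dy)\le\int_{\mathbb{S}}\pi(\{y\})\pi(dy)+\big(1-\int_{\mathbb{S}}\pi(\{y\})\pi(dy)\big)\frac{2\hat w}{2\hat w+\lambda-1}$, and, with $\psi(\lambda)=\frac{\int_{\mathbb{S}}[P_\lambda(y,\{y\})-\pi(\{y\})]\pi(dy)}{1-\int_{\mathbb{S}}\pi(\{y\})\pi(dy)}$, $0<\psi(\lambda)\le\frac{2\hat w}{2\hat w+\lambda-1}$ and $1<\frac{1+\psi(\lambda)}{1-\psi(\lambda)}\le\frac{4\hat w+\lambda-1}{\lambda-1}$ (the last for $\lambda>1$). All the upper bounds are asserted under the additional assumption $\hat w=\sup_xw(x)<\infty$.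
   Context: Let $\pi,q$ be probability densities with respect to a $\sigma$-finite measure $\mu$ on $(\mathbb{X},\mathcal{X})$ (singletons measurable) with $q>0$ wherever $\pi>0$; $\pi(dx)=\pi(x)\mu(dx)$, $\pi(A)=\int_A\pi(dx)$, $q(dx)=q(x)\mu(dx)$, $\mathbb{S}=\{\pi>0\}$, $w=\pi/q$ on $\mathbb{S}$ and $0$ elsewhere. For integer $N\ge1$ and $z_1\in\mathbb{S}$, $P_N(z_1,A)=\int_{\mathbb{X}^{N-1}}\sum_{i=1}^N\frac{w(z_i)}{\sum_{j=1}^Nw(z_j)}\mathbf 1\{z_i\in A\}\prod_{n=2}^Nq(dz_n)$, $P_1(z,\cdot)=\delta_z$; for real $\lambda\ge1$, $P_\lambda=\beta P_{\lfloor\lambda\rfloor}+(1-\beta)P_{\lfloor\lambda\rfloor+1}$ with $\beta=\lfloor\lambda\rfloor+1-\lambda$. *)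

theory Defs
  imports "HOL-Probability.Probability"
begin

definition iw :: "('a \<Rightarrow> real) \<Rightarrow> ('a \<Rightarrow> real) \<Rightarrow> 'a \<Rightarrow> real" where
  "iw p q x = (if p x > 0 then p x / q x else 0)"

definition dens :: "'a measure \<Rightarrow> ('a \<Rightarrow> real) \<Rightarrow> 'a measure" where
  "dens M f = density M (\<lambda>x. ennreal (f x))"

text \<open>The i-SIR kernel P_N(z, A); proposals z_2..z_N are i.i.d. q, indexed by {2..N};
  the current state z is placed at index 1.  P_1(z, .) is the Dirac mass at z.\<close>
definition PN :: "'a measure \<Rightarrow> ('a \<Rightarrow> real) \<Rightarrow> ('a \<Rightarrow> real) \<Rightarrow> nat \<Rightarrow> 'a \<Rightarrow> 'a set \<Rightarrow> real" where
  "PN M p q N z A =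
     (if N = 1 then indicator A z
      else (\<integral>zs. (let y = zs(1 := z) in
               (\<Sum>i\<in>{1..N}. iw p q (y i) / (\<Sum>j\<in>{1..N}. iw p q (y j)) * indicator A (y i)))
            \<partial>(PiM {2..N} (\<lambda>_. dens M q))))"

definition Plam :: "'a measure \<Rightarrow> ('a \<Rightarrow> real) \<Rightarrow> ('a \<Rightarrow> real) \<Rightarrow> real \<Rightarrow> 'a \<Rightarrow> 'a set \<Rightarrow> real" where
  "Plam M p q lam z A =
     (let n = nat \<lfloor>lam\<rfloor>; \<beta> = real n + 1 - lam in
        \<beta> * PN M p q n z A + (1 - \<beta>) * PN M p q (n + 1) z A)"

end

theory Submission
  imports Defs
begin

locale isir =
  fixes M :: "'a measure" and p q :: "'a \<Rightarrow> real"
  assumes sing: "\<And>y. {y} \<in> sets M"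
    and p_meas[measurable]: "p \<in> borel_measurable M" and q_meas[measurable]: "q \<in> borel_measurable M"
    and p_nn: "\<And>y. p y \<ge> 0" and q_nn: "\<And>y. q y \<ge> 0"
    and p_int: "(\<integral>\<^sup>+ y. ennreal (p y) \<partial>M) = 1"
    and q_int: "(\<integral>\<^sup>+ y. ennreal (q y) \<partial>M) = 1"
    and q_pos: "\<And>y. p y > 0 \<Longrightarrow> q y > 0"
    and nondeg: "\<And>a. measure (dens M p) ({y. p y > 0} - {a}) > 0"
begin

abbreviation "Q \<equiv> dens M q"
abbreviation "Pm \<equiv> dens M p"
abbreviation "w \<equiv> iw p q"
abbreviation "S \<equiv> {y. p y > 0}"

lemma space_M: "space M = UNIV"
  using sets.sets_into_space[OF sing] by auto

lemma sets_Q[measurable_cong]: "sets Q = sets M" and sets_Pm[measurable_cong]: "sets Pm = sets M"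
  by (simp_all add: dens_def)

lemma space_Q[simp]: "space Q = UNIV" and space_Pm[simp]: "space Pm = UNIV"
  by (simp_all add: dens_def space_M)

lemma sing_Q[measurable]: "{y} \<in> sets Q" and sing_Pm[measurable]: "{y} \<in> sets Pm"
  by (simp_all add: sets_Q sets_Pm sing)

lemma S_sets[measurable]: "S \<in> sets M"
proof -
  have "S = {y \<in> space M. p y > 0}" by (simp add: space_M)
  also have "\<dots> \<in> sets M" by measurable
  finally show ?thesis .
qed

lemma w_meas[measurable]: "w \<in> borel_measurable M"
  unfolding iw_def by measurable

lemma w_nn: "w y \<ge> 0"
  unfolding iw_def using p_nn q_nn by auto

lemma w_pos: "p y > 0 \<Longrightarrow> w y > 0"
  unfolding iw_def using q_pos by auto

lemma qw: "q y * w y = p y"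
proof (cases "p y > 0")
  case True then show ?thesis using q_pos[of y] by (simp add: iw_def)
next
  case False then show ?thesis using p_nn[of y] by (simp add: iw_def)
qed

lemma UNIV_sets[measurable]: "UNIV \<in> sets M"
  using sets.top[of M] space_M by simp

lemma prob_Q: "prob_space Q"
proof
  have "emeasure Q (space Q) = (\<integral>\<^sup>+ x. ennreal (q x) * indicator (space M) x \<partial>M)"
    unfolding dens_def by (subst emeasure_density) (auto simp: space_M)
  also have "\<dots> = 1" using q_int by (simp add: space_M)
  finally show "emeasure Q (space Q) = 1" .
qed

lemma prob_Pm: "prob_space Pm"
proof
  have "emeasure Pm (space Pm) = (\<integral>\<^sup>+ x. ennreal (p x) * indicator (space M) x \<partial>M)"
    unfolding dens_def by (subst emeasure_density) (auto simp: space_M)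
  also have "\<dots> = 1" using p_int by (simp add: space_M)
  finally show "emeasure Pm (space Pm) = 1" .
qed

sublocale Qp: prob_space Q by (rule prob_Q)
sublocale Pp: prob_space Pm by (rule prob_Pm)

lemma Wr: assumes [measurable]: "f \<in> borel_measurable M" shows "(\<integral>z. w z * f z \<partial>Q) = (\<integral>z. f z \<partial>Pm)"
proof -
  have "(\<integral>z. w z * f z \<partial>Q) = (\<integral>z. q z * (w z * f z) \<partial>M)"
    unfolding dens_def by (subst integral_density) (auto simp: q_nn)
  also have "\<dots> = (\<integral>z. p z * f z \<partial>M)"
    by (simp add: qw mult.assoc[symmetric])
  also have "\<dots> = (\<integral>z. f z \<partial>Pm)"
    unfolding dens_def by (subst integral_density) (auto simp: p_nn)
  finally show ?thesis .
qed

lemma Wr_int: assumes [measurable]: "f \<in> borel_measurable M" shows "integrable Q (\<lambda>z. w z * f z) \<longleftrightarrow> integrable Pm f"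
proof -
  have "integrable Q (\<lambda>z. w z * f z) \<longleftrightarrow> integrable M (\<lambda>z. q z * (w z * f z))"
    unfolding dens_def by (subst integrable_density) (auto simp: q_nn)
  also have "\<dots> \<longleftrightarrow> integrable M (\<lambda>z. p z * f z)"
    by (simp add: qw mult.assoc[symmetric])
  also have "\<dots> \<longleftrightarrow> integrable Pm f"
    unfolding dens_def by (subst integrable_density) (auto simp: p_nn)
  finally show ?thesis .
qed

lemma w_int: "integrable Q w" and w_int1: "(\<integral>z. w z \<partial>Q) = 1"
proof -
  have "integrable Q (\<lambda>z. w z * 1)" by (subst Wr_int) auto
  then show "integrable Q w" by simp
  have "(\<integral>z. w z * 1 \<partial>Q) = 1" using Pp.prob_space by (subst Wr) auto
  then show "(\<integral>z. w z \<partial>Q) = 1" by simp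
qed

definition pix :: "'a \<Rightarrow> real" where "pix a = measure Pm {a}"

lemma pix_w: "(\<integral>z. w z * indicator {a} z \<partial>Q) = pix a"
  by (subst Wr) (auto simp: pix_def)

lemma pix_w': "(\<integral>z. w z * (1 - indicator {a} z) \<partial>Q) = 1 - pix a"
proof -
  have "(\<integral>z. w z * (1 - indicator {a} z) \<partial>Q) = (\<integral>z. w z - w z * indicator {a} z \<partial>Q)"
    by (simp add: algebra_simps)
  also have "\<dots> = 1 - pix a"
  proof (subst Bochner_Integration.integral_diff)
    show "integrable Q (\<lambda>z. w z * indicator {a} z)"
      by (subst Wr_int) (auto intro!: Pp.integrable_const_bound[where B=1])
  qed (auto simp: w_int w_int1 pix_w)
  finally show ?thesis .
qed

lemma pix_nn: "pix a \<ge> 0" by (simp add: pix_def)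

lemma pix_lt1: "pix a < 1"
proof -
  have "pix a + measure Pm (S - {a}) = measure Pm ({a} \<union> (S - {a}))"
    unfolding pix_def by (subst Pp.finite_measure_Union) auto
  also have "\<dots> \<le> 1" by simp
  finally show ?thesis using nondeg[of a] by simp
qed

lemma Q_null_Pm: assumes "A \<in> sets M" "emeasure Q A = 0" shows "measure Pm A = 0"
proof -
  have "measure Pm A = (\<integral>z. w z * indicator A z \<partial>Q)"
    using assms by (subst Wr) auto
  also have "\<dots> = (\<integral>z. 0 \<partial>Q)"
  proof (rule integral_cong_AE)
    have "AE z in Q. z \<notin> A" using assms by (intro AE_not_in) (auto simp: sets_Q)
    then show "AE z in Q. w z * indicator A z = 0" by eventually_elim auto
  qed (use assms in auto)
  finally show ?thesis by simp
qed

lemma pix_eq: "pix a = w a * measure Q {a}"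
proof -
  have "pix a = (\<integral>z. w a * indicator {a} z \<partial>Q)"
    by (subst pix_w[symmetric]) (rule Bochner_Integration.integral_cong, auto simp: indicator_def)
  also have "\<dots> = w a * measure Q {a}" by simp
  finally show ?thesis .
qed

end
context isir begin

abbreviation Om :: "nat set \<Rightarrow> (nat \<Rightarrow> 'a) measure" where "Om I \<equiv> PiM I (\<lambda>_. Q)"

sublocale Qps: product_sigma_finite "\<lambda>_::nat. Q"
  by (simp add: product_sigma_finite_def Qp.sigma_finite_measure_axioms)

lemma Q1[simp]: "measure Q UNIV = 1"
  using Qp.prob_space by simp

lemma prob_Om: "prob_space (Om I)"
  by (rule prob_space_PiM) (rule prob_Q)

lemma toQ: "f \<in> borel_measurable M \<Longrightarrow> f \<in> borel_measurable Q"
  using measurable_cong_sets[OF sets_Q refl] by blast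

lemma comp_meas: "k \<in> I \<Longrightarrow> f \<in> borel_measurable M \<Longrightarrow> (\<lambda>y. f (y k)) \<in> borel_measurable (Om I)"
  using measurable_compose[OF measurable_component_singleton[of k I "\<lambda>_. Q"] toQ] by blast

lemma wc_meas[measurable]: "k \<in> I \<Longrightarrow> (\<lambda>y. w (y k)) \<in> borel_measurable (Om I)"
  by (rule comp_meas) auto

lemma comp_int:
  fixes f :: "'a \<Rightarrow> real"
  assumes k: "k \<in> I" and f: "f \<in> borel_measurable M"
  shows "(\<integral>y. f (y k) \<partial>Om I) = (\<integral>z. f z \<partial>Q)"
    and "integrable (Om I) (\<lambda>y. f (y k)) \<longleftrightarrow> integrable Q f"
proof -
  have D: "distr (Om I) Q (\<lambda>\<omega>. \<omega> k) = Q"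
    by (rule distr_PiM_component) (auto simp: prob_Q k)
  have f': "f \<in> borel_measurable Q" using f by (rule toQ)
  have "(\<integral>z. f z \<partial>Q) = (\<integral>z. f z \<partial>distr (Om I) Q (\<lambda>\<omega>. \<omega> k))" by (simp add: D)
  also have "\<dots> = (\<integral>y. f (y k) \<partial>Om I)"
    by (rule integral_distr[OF measurable_component_singleton[OF k, of "\<lambda>_. Q"] f'])
  finally show "(\<integral>y. f (y k) \<partial>Om I) = (\<integral>z. f z \<partial>Q)" by simp
  have "integrable Q f \<longleftrightarrow> integrable (distr (Om I) Q (\<lambda>\<omega>. \<omega> k)) f" by (simp add: D)
  also have "\<dots> \<longleftrightarrow> integrable (Om I) (\<lambda>y. f (y k))"
    by (rule integrable_distr_eq[OF measurable_component_singleton[OF k, of "\<lambda>_. Q"] f'])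
  finally show "integrable (Om I) (\<lambda>y. f (y k)) \<longleftrightarrow> integrable Q f" by simp
qed

lemma pair_int:
  fixes f g :: "'a \<Rightarrow> real"
  assumes I: "finite I" and jk: "j \<in> I" "k \<in> I" "j \<noteq> k"
    and f: "integrable Q f" and g: "integrable Q g"
  shows "(\<integral>y. f (y j) * g (y k) \<partial>Om I) = (\<integral>z. f z \<partial>Q) * (\<integral>z. g z \<partial>Q)"
proof -
  define F where "F i = (if i = j then f else if i = k then g else (\<lambda>_. 1::real))" for i
  have "\<And>y. (\<Prod>i\<in>I. F i (y i)) = f (y j) * g (y k)"
  proof -
    fix y
    have "(\<Prod>i\<in>I. F i (y i)) = F j (y j) * (\<Prod>i\<in>I - {j}. F i (y i))"
      using I jk by (subst prod.remove[of I j]) auto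
    also have "(\<Prod>i\<in>I - {j}. F i (y i)) = F k (y k) * (\<Prod>i\<in>I - {j} - {k}. F i (y i))"
      using I jk by (subst prod.remove[of "I - {j}" k]) auto
    also have "(\<Prod>i\<in>I - {j} - {k}. F i (y i)) = 1"
      by (rule prod.neutral) (auto simp: F_def)
    finally show "(\<Prod>i\<in>I. F i (y i)) = f (y j) * g (y k)" using jk by (simp add: F_def)
  qed
  then have "(\<integral>y. f (y j) * g (y k) \<partial>Om I) = (\<integral>y. (\<Prod>i\<in>I. F i (y i)) \<partial>Om I)" by simp
  also have "\<dots> = (\<Prod>i\<in>I. integral\<^sup>L Q (F i))"
    by (rule Qps.product_integral_prod[OF I]) (auto simp: F_def f g)
  also have "\<dots> = integral\<^sup>L Q (F j) * (\<Prod>i\<in>I - {j}. integral\<^sup>L Q (F i))"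
    using I jk by (subst prod.remove[of I j]) auto
  also have "(\<Prod>i\<in>I - {j}. integral\<^sup>L Q (F i)) = integral\<^sup>L Q (F k) * (\<Prod>i\<in>I - {j} - {k}. integral\<^sup>L Q (F i))"
    using I jk by (subst prod.remove[of "I - {j}" k]) auto
  also have "(\<Prod>i\<in>I - {j} - {k}. integral\<^sup>L Q (F i)) = 1"
    by (rule prod.neutral) (auto simp: F_def)
  finally show ?thesis using jk by (simp add: F_def)
qed


end
context isir begin
definition Wt :: "nat \<Rightarrow> (nat \<Rightarrow> 'a) \<Rightarrow> real" where
  "Wt N y = (\<Sum>i\<in>{1..N}. w (y i))"
definition G :: "nat \<Rightarrow> 'a set \<Rightarrow> (nat \<Rightarrow> 'a) \<Rightarrow> real" where
  "G N A y = (\<Sum>i\<in>{1..N}. w (y i) / (\<Sum>j\<in>{1..N}. w (y j)) * indicator A (y i))"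
definition St :: "nat \<Rightarrow> 'a \<Rightarrow> (nat \<Rightarrow> 'a) \<Rightarrow> real" where
  "St N a y = (\<Sum>i\<in>{1..N}. w (y i) * indicator {a} (y i))"
definition Bs :: "nat \<Rightarrow> (nat \<Rightarrow> 'a) \<Rightarrow> real" where
  "Bs N zs = (\<Sum>j\<in>{2..N}. w (zs j))"
definition Cs :: "nat \<Rightarrow> 'a \<Rightarrow> (nat \<Rightarrow> 'a) \<Rightarrow> real" where
  "Cs N a zs = (\<Sum>j\<in>{2..N}. w (zs j) * indicator {a} (zs j))"

lemma PN_eq: "N \<noteq> 1 \<Longrightarrow> PN M p q N z A = (\<integral>zs. G N A (zs(1:=z)) \<partial>Om {2..N})"
  unfolding PN_def G_def Let_def by simp

lemma G_St: "G N {a} y = St N a y / Wt N y"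
  unfolding G_def St_def Wt_def sum_divide_distrib by (rule sum.cong) auto

lemma Wt_nn: "Wt N y \<ge> 0" unfolding Wt_def by (intro sum_nonneg w_nn)
lemma St_nn: "St N a y \<ge> 0" unfolding St_def by (intro sum_nonneg mult_nonneg_nonneg w_nn) auto
lemma St_le: "St N a y \<le> Wt N y" unfolding St_def Wt_def
  by (intro sum_mono) (auto simp: indicator_def w_nn)
lemma Bs_nn: "Bs N y \<ge> 0" unfolding Bs_def by (intro sum_nonneg w_nn)
lemma Cs_nn: "Cs N a y \<ge> 0" unfolding Cs_def by (intro sum_nonneg mult_nonneg_nonneg w_nn) auto
lemma Cs_le: "Cs N a y \<le> Bs N y" unfolding Cs_def Bs_def
  by (intro sum_mono) (auto simp: indicator_def w_nn)

lemma frac01: "0 \<le> (a::real) \<Longrightarrow> a \<le> b \<Longrightarrow> a / b \<le> 1"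
  by (cases "b = 0") (auto simp: divide_le_eq_1)

lemma G_bounds: "0 \<le> G N {a} y" "G N {a} y \<le> 1"
  unfolding G_St using St_nn St_le Wt_nn
  by (auto intro!: divide_nonneg_nonneg frac01)

lemma ins12: "1 \<le> N \<Longrightarrow> {1..N} = insert 1 {2..N::nat}" by auto

lemma sum_upd: fixes N :: nat assumes "1 \<le> N"
  shows "(\<Sum>i\<in>{1..N}. F ((zs(1:=z)) i)) = F z + (\<Sum>j\<in>{2..N}. F (zs j))"
proof -
  have "(\<Sum>i\<in>{1..N}. F ((zs(1:=z)) i)) = (\<Sum>i\<in>insert 1 {2..N}. F ((zs(1:=z)) i))"
    using assms by (simp only: ins12)
  also have "\<dots> = F ((zs(1:=z)) 1) + (\<Sum>i\<in>{2..N}. F ((zs(1:=z)) i))"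
    by (rule sum.insert) auto
  also have "(\<Sum>i\<in>{2..N}. F ((zs(1:=z)) i)) = (\<Sum>j\<in>{2..N}. F (zs j))"
    by (rule sum.cong) auto
  finally show ?thesis by simp
qed

lemma Wt_upd: "1 \<le> N \<Longrightarrow> Wt N (zs(1:=z)) = w z + Bs N zs"
  unfolding Wt_def Bs_def by (rule sum_upd)
lemma St_upd: "1 \<le> N \<Longrightarrow> St N a (zs(1:=z)) = w z * indicator {a} z + Cs N a zs"
  unfolding St_def Cs_def by (rule sum_upd[where F="\<lambda>x. w x * indicator {a} x"])

lemma G_upd: "1 \<le> N \<Longrightarrow> G N {a} (zs(1:=a)) = (w a + Cs N a zs) / (w a + Bs N zs)"
  unfolding G_St by (simp only: Wt_upd St_upd) simp

lemma Bs_meas[measurable]: "Bs N \<in> borel_measurable (Om {2..N})"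
  unfolding Bs_def by (intro borel_measurable_sum wc_meas) auto

lemma Cs_meas[measurable]: "Cs N a \<in> borel_measurable (Om {2..N})"
  unfolding Cs_def
  by (intro borel_measurable_sum borel_measurable_times wc_meas comp_meas) (auto intro: borel_measurable_indicator sing)

lemma Wt_meas[measurable]: "Wt N \<in> borel_measurable (Om {1..N})"
  unfolding Wt_def by (intro borel_measurable_sum wc_meas) auto

lemma St_meas[measurable]: "St N a \<in> borel_measurable (Om {1..N})"
  unfolding St_def
  by (intro borel_measurable_sum borel_measurable_times wc_meas comp_meas) (auto intro: borel_measurable_indicator sing)

lemma PN_diag: "2 \<le> N \<Longrightarrow> PN M p q N a {a} = (\<integral>zs. (w a + Cs N a zs) / (w a + Bs N zs) \<partial>Om {2..N})"
proof -
  assume N: "2 \<le> N"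
  then have "PN M p q N a {a} = (\<integral>zs. G N {a} (zs(1:=a)) \<partial>Om {2..N})" by (intro PN_eq) simp
  also have "\<dots> = (\<integral>zs. (w a + Cs N a zs) / (w a + Bs N zs) \<partial>Om {2..N})"
    using N by (intro Bochner_Integration.integral_cong refl G_upd) simp
  finally show ?thesis .
qed

lemma PN_int: "integrable (Om {2..N}) (\<lambda>zs. (w a + Cs N a zs) / (w a + Bs N zs))"
proof -
  interpret O: prob_space "Om {2..N}" by (rule prob_Om)
  show ?thesis
  proof (rule O.integrable_const_bound[where B=1])
    show "AE x in Om {2..N}. norm ((w a + Cs N a x) / (w a + Bs N x)) \<le> 1"
      using Cs_nn Cs_le Bs_nn w_nn[of a]
      by (intro AE_I2) (simp add: frac01 abs_le_iff)
  qed measurable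
qed

lemma PN_bounds: "0 \<le> PN M p q N a {a}" "PN M p q N a {a} \<le> 1"
proof -
  interpret O: prob_space "Om {2..N}" by (rule prob_Om)
  have "0 \<le> PN M p q N a {a} \<and> PN M p q N a {a} \<le> 1"
  proof (cases "N \<le> 1")
    case True
    then have "N = 0 \<or> N = 1" by auto
    then show ?thesis
    proof
      assume "N = 1" then show ?thesis by (simp add: PN_def)
    next
      assume N0: "N = 0"
      then show ?thesis unfolding PN_def G_def by simp
    qed
  next
    case False
    then have N: "2 \<le> N" by simp
    have "0 \<le> (\<integral>zs. (w a + Cs N a zs) / (w a + Bs N zs) \<partial>Om {2..N})"
      using Cs_nn Bs_nn w_nn[of a] by (intro integral_nonneg_AE AE_I2) auto
    moreover have "(\<integral>zs. (w a + Cs N a zs) / (w a + Bs N zs) \<partial>Om {2..N}) \<le> (\<integral>zs. 1 \<partial>Om {2..N})"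
      using Cs_nn Cs_le Bs_nn w_nn[of a]
      by (intro integral_mono PN_int) (auto intro!: frac01)
    ultimately show ?thesis using N by (simp add: PN_diag O.prob_space)
  qed
  then show "0 \<le> PN M p q N a {a}" "PN M p q N a {a} \<le> 1" by auto
qed

end
context isir begin

definition As :: "nat \<Rightarrow> 'a \<Rightarrow> (nat \<Rightarrow> 'a) \<Rightarrow> real" where
  "As N a zs = (\<Sum>j\<in>{2..N}. w (zs j) * (1 - indicator {a} (zs j)))"

lemma As_eq: "As N a zs = Bs N zs - Cs N a zs"
  unfolding As_def Bs_def Cs_def sum_subtractf[symmetric] by (rule sum.cong) (auto simp: algebra_simps)

lemma Sa_sets[measurable]: "S - {a} \<in> sets M" by (intro sets.Diff S_sets sing)

lemma As_nn: "As N a zs \<ge> 0"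
  unfolding As_def by (intro sum_nonneg mult_nonneg_nonneg w_nn) (auto simp: indicator_def)

lemma As_meas[measurable]: "As N a \<in> borel_measurable (Om {2..N})"
  unfolding As_eq[abs_def] by measurable

lemma one_minus_frac: "p a > 0 \<Longrightarrow> 1 - (w a + Cs N a zs) / (w a + Bs N zs) = As N a zs / (w a + Bs N zs)"
  using w_pos[of a] Bs_nn[of N zs] by (simp add: As_eq field_simps)

lemma PN_As: assumes "p a > 0" "2 \<le> N"
  shows "PN M p q N a {a} = 1 - (\<integral>zs. As N a zs / (w a + Bs N zs) \<partial>Om {2..N})"
proof -
  interpret O: prob_space "Om {2..N}" by (rule prob_Om)
  have "(\<integral>zs. As N a zs / (w a + Bs N zs) \<partial>Om {2..N}) = (\<integral>zs. 1 - (w a + Cs N a zs) / (w a + Bs N zs) \<partial>Om {2..N})"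
    using assms by (simp add: one_minus_frac)
  also have "\<dots> = 1 - PN M p q N a {a}"
    using assms PN_int[of N a] by (simp add: PN_diag O.prob_space)
  finally show ?thesis by simp
qed

lemma frac_int: "p a > 0 \<Longrightarrow> integrable (Om {2..N}) (\<lambda>zs. As N a zs / (w a + Bs N zs))"
proof -
  assume pa: "p a > 0"
  have "integrable (Om {2..N}) (\<lambda>zs. 1 - (w a + Cs N a zs) / (w a + Bs N zs))"
    using PN_int[of N a] prob_Om by (auto intro!: Bochner_Integration.integrable_diff finite_measure.integrable_const prob_space.finite_measure)
  then show ?thesis using pa by (simp add: one_minus_frac)
qed

lemma Q_S_minus: "emeasure Q (S - {a}) \<noteq> 0"
proof
  assume "emeasure Q (S - {a}) = 0"
  then have "measure Pm (S - {a}) = 0" by (intro Q_null_Pm) auto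
  with nondeg[of a] show False by simp
qed

lemma PN_lt1: assumes pa: "p a > 0" and N: "2 \<le> N" shows "PN M p q N a {a} < 1"
proof -
  interpret O: prob_space "Om {2..N}" by (rule prob_Om)
  define A where "A = (\<lambda>\<omega>. \<omega> (2::nat)) -` (S - {a}) \<inter> space (Om {2..N})"
  have D: "distr (Om {2..N}) Q (\<lambda>\<omega>. \<omega> 2) = Q"
    using N by (intro distr_PiM_component) (auto simp: prob_Q)
  have mc: "(\<lambda>\<omega>. \<omega> (2::nat)) \<in> measurable (Om {2..N}) Q"
    using N by (intro measurable_component_singleton) auto
  have SA: "S - {a} \<in> sets Q" by (simp add: sets_Q)
  have "emeasure (Om {2..N}) A = emeasure (distr (Om {2..N}) Q (\<lambda>\<omega>. \<omega> 2)) (S - {a})"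
    unfolding A_def by (rule emeasure_distr[OF mc SA, symmetric])
  also have "\<dots> = emeasure Q (S - {a})" by (simp add: D)
  finally have eA: "emeasure (Om {2..N}) A \<noteq> 0" using Q_S_minus by simp
  have Asets: "A \<in> sets (Om {2..N})"
    unfolding A_def by (rule measurable_sets[OF mc SA])
  have pos: "As N a zs > 0" if "zs 2 \<in> S - {a}" for zs
  proof -
    have "0 < w (zs 2) * (1 - indicator {a} (zs 2))" using that w_pos by auto
    also have "\<dots> \<le> As N a zs" unfolding As_def
      using N by (intro member_le_sum mult_nonneg_nonneg w_nn) (auto simp: indicator_def)
    finally show ?thesis .
  qed
  have "(\<integral>zs. 0 \<partial>Om {2..N}) < (\<integral>zs. As N a zs / (w a + Bs N zs) \<partial>Om {2..N})"
  proof (rule O.integral_less_AE[OF _ frac_int[OF pa] eA Asets])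
    show "AE x in Om {2..N}. x \<in> A \<longrightarrow> 0 \<noteq> As N a x / (w a + Bs N x)"
    proof (intro AE_I2 impI)
      fix x assume "x \<in> A"
      then have "As N a x > 0" by (intro pos) (auto simp: A_def)
      moreover have "w a + Bs N x > 0" using w_pos[OF pa] Bs_nn[of N x] by simp
      ultimately show "0 \<noteq> As N a x / (w a + Bs N x)" by simp
    qed
    show "AE x in Om {2..N}. 0 \<le> As N a x / (w a + Bs N x)"
      using As_nn w_nn Bs_nn by (intro AE_I2 divide_nonneg_nonneg) (auto intro: add_nonneg_nonneg)
  qed simp
  then show ?thesis using PN_As[OF pa N] by simp
qed

end
context isir begin

lemma bnd_int: fixes f :: "_ \<Rightarrow> real" shows "f \<in> borel_measurable (Om I) \<Longrightarrow> (\<And>x. \<bar>f x\<bar> \<le> K) \<Longrightarrow> integrable (Om I) f"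
proof -
  assume f: "f \<in> borel_measurable (Om I)" and b: "\<And>x. \<bar>f x\<bar> \<le> K"
  interpret O: prob_space "Om I" by (rule prob_Om)
  show ?thesis by (rule O.integrable_const_bound[where B=K]) (use f b in auto)
qed

lemma bndQ_int: fixes f :: "_ \<Rightarrow> real" shows "f \<in> borel_measurable M \<Longrightarrow> (\<And>x. \<bar>f x\<bar> \<le> K) \<Longrightarrow> integrable Q f"
  by (rule Qp.integrable_const_bound[where B=K]) (auto intro: toQ)

lemma tangent: "0 < (t::real) \<Longrightarrow> 0 < K \<Longrightarrow> 0 \<le> A \<Longrightarrow> A * (2 / K - t / K^2) \<le> A / t"
proof -
  assume t: "0 < t" and K: "0 < K" and A: "0 \<le> A"
  have "2 / K - t / K^2 \<le> 1 / t"
  proof -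
    have "(2 / K - t / K^2) * t = 1 - (t - K)^2 / K^2"
      using K by (simp add: field_simps power2_eq_square)
    also have "\<dots> \<le> 1" by simp
    finally show ?thesis using t by (simp add: field_simps)
  qed
  then show ?thesis using A by (metis mult_left_mono times_divide_eq_right mult.right_neutral)
qed

lemma PN_upper:
  assumes pa: "p a > 0" and N: "2 \<le> N" and hb: "\<And>y. w y \<le> h"
  shows "PN M p q N a {a} - pix a \<le> (1 - pix a) * (2 * h - 1) / (2 * h + real N - 2)"
proof -
  define J where "J = {2..N}"
  define \<pi> where "\<pi> = pix a"
  define c where "c = w a"
  define aF where "aF z = w z * (1 - indicator {a} z)" for z
  define K where "K = 2 * h + real N - 2"
  interpret O: prob_space "Om J" unfolding J_def by (rule prob_Om)
  have c_pos: "c > 0" using w_pos[OF pa] by (simp add: c_def)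
  have ch: "c \<le> h" using hb by (simp add: c_def)
  have h_pos: "h > 0" using c_pos ch by simp
  have K_pos: "K > 0" using h_pos N by (simp add: K_def)
  have finJ: "finite J" and cardJ: "card J = N - 1" using N by (auto simp: J_def)
  have aF_meas[measurable]: "aF \<in> borel_measurable M" unfolding aF_def by measurable
  have aF_nn: "0 \<le> aF z" for z using w_nn by (simp add: aF_def indicator_def)
  have aF_le: "aF z \<le> h" for z using hb w_nn h_pos by (simp add: aF_def indicator_def)
  have aF_w: "aF z \<le> w z" for z using w_nn by (simp add: aF_def indicator_def)
  have int_aF: "(\<integral>z. aF z \<partial>Q) = 1 - \<pi>" unfolding aF_def \<pi>_def by (rule pix_w')
  have aFi: "integrable Q aF" by (rule bndQ_int[where K=h]) (use aF_nn aF_le in auto)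
  have wi: "integrable Q w" by (rule w_int)
  have As_J: "As N a zs = (\<Sum>j\<in>J. aF (zs j))" for zs unfolding As_def aF_def J_def ..
  have Bs_J: "Bs N zs = (\<Sum>j\<in>J. w (zs j))" for zs unfolding Bs_def J_def ..
  have cm: "(\<lambda>zs. f (zs j)) \<in> borel_measurable (Om J)" if "j \<in> J" "f \<in> borel_measurable M" for f j
    using that by (rule comp_meas)
  have E1: "(\<integral>zs. As N a zs \<partial>Om J) = real (N - 1) * (1 - \<pi>)"
  proof -
    have "(\<integral>zs. As N a zs \<partial>Om J) = (\<Sum>j\<in>J. (\<integral>zs. aF (zs j) \<partial>Om J))"
      unfolding As_J
      by (rule Bochner_Integration.integral_sum) (use aFi comp_int(2) in auto)
    also have "\<dots> = (\<Sum>j\<in>J. 1 - \<pi>)"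
      by (rule sum.cong) (auto simp: comp_int(1) int_aF)
    finally show ?thesis using cardJ by simp
  qed
  have pij: "(\<integral>zs. aF (zs j) * w (zs k) \<partial>Om J) \<le> (if j = k then h * (1 - \<pi>) else 1 - \<pi>)"
    if jk: "j \<in> J" "k \<in> J" for j k
  proof (cases "j = k")
    case True
    have "(\<integral>zs. aF (zs j) * w (zs k) \<partial>Om J) = (\<integral>z. aF z * w z \<partial>Q)"
      using True comp_int(1)[of k J "\<lambda>z. aF z * w z"] jk by simp
    also have "\<dots> \<le> (\<integral>z. h * aF z \<partial>Q)"
    proof (rule integral_mono)
      show "integrable Q (\<lambda>z. aF z * w z)"
        by (rule bndQ_int[where K="h*h"]) (use aF_nn aF_le w_nn hb h_pos in \<open>auto simp: abs_mult intro!: mult_mono\<close>)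
      show "integrable Q (\<lambda>z. h * aF z)" using aFi by simp
      show "aF z * w z \<le> h * aF z" for z using mult_left_mono[OF hb[of z] aF_nn[of z]] by (simp add: mult.commute)
    qed
    also have "\<dots> = h * (1 - \<pi>)" by (simp add: int_aF)
    finally show ?thesis using True by simp
  next
    case False
    have "(\<integral>zs. aF (zs j) * w (zs k) \<partial>Om J) = (\<integral>z. aF z \<partial>Q) * (\<integral>z. w z \<partial>Q)"
      by (rule pair_int[OF finJ jk False aFi wi])
    then show ?thesis using False by (simp add: int_aF w_int1)
  qed
  have pint: "integrable (Om J) (\<lambda>zs. aF (zs j) * w (zs k))" if "j \<in> J" "k \<in> J" for j k
    by (rule bnd_int[where K="h*h"]) (use that aF_nn aF_le w_nn hb h_pos cm in \<open>auto simp: abs_mult intro!: mult_mono\<close>)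
  have E2: "(\<integral>zs. As N a zs * (c + Bs N zs) \<partial>Om J) \<le> real (N - 1) * (1 - \<pi>) * K"
  proof -
    have eq: "As N a zs * (c + Bs N zs) = c * As N a zs + (\<Sum>j\<in>J. \<Sum>k\<in>J. aF (zs j) * w (zs k))" for zs
      unfolding As_J Bs_J by (simp add: algebra_simps sum_product)
    have Ai: "integrable (Om J) (As N a)"
      unfolding As_J by (intro Bochner_Integration.integrable_sum) (use aFi comp_int(2) in auto)
    have "(\<integral>zs. As N a zs * (c + Bs N zs) \<partial>Om J)
        = c * (\<integral>zs. As N a zs \<partial>Om J) + (\<Sum>j\<in>J. \<Sum>k\<in>J. (\<integral>zs. aF (zs j) * w (zs k) \<partial>Om J))"
      unfolding eq
      by (subst Bochner_Integration.integral_add)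
         (auto intro!: Bochner_Integration.integrable_sum pint Ai simp: Bochner_Integration.integral_sum pint)
    also have "\<dots> \<le> c * (real (N - 1) * (1 - \<pi>)) + (\<Sum>j\<in>J. h * (1 - \<pi>) + (\<Sum>k\<in>J - {j}. 1 - \<pi>))"
    proof -
      have inner: "(\<Sum>k\<in>J. (\<integral>zs. aF (zs j) * w (zs k) \<partial>Om J)) \<le> h * (1 - \<pi>) + (\<Sum>k\<in>J - {j}. 1 - \<pi>)"
        if j: "j \<in> J" for j
      proof -
        have "(\<Sum>k\<in>J. (\<integral>zs. aF (zs j) * w (zs k) \<partial>Om J)) \<le> (\<Sum>k\<in>J. (if j = k then h * (1 - \<pi>) else 1 - \<pi>))"
          by (intro sum_mono pij j)
        also have "\<dots> = h * (1 - \<pi>) + (\<Sum>k\<in>J - {j}. 1 - \<pi>)"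
          using finJ j by (subst sum.remove[of J j]) auto
        finally show ?thesis .
      qed
      show ?thesis unfolding E1 by (intro add_mono order.refl sum_mono inner)
    qed
    also have "\<dots> = real (N - 1) * (1 - \<pi>) * (c + h + real (N - 2))"
      using finJ cardJ N by (simp add: card_Diff_singleton algebra_simps of_nat_diff)
    also have "\<dots> \<le> real (N - 1) * (1 - \<pi>) * K"
    proof (rule mult_left_mono)
      show "c + h + real (N - 2) \<le> K" using ch N by (simp add: K_def of_nat_diff)
      show "0 \<le> real (N - 1) * (1 - \<pi>)" using pix_lt1[of a] by (simp add: \<pi>_def)
    qed
    finally show ?thesis .
  qed
  have Ai: "integrable (Om J) (As N a)"
    unfolding As_J by (intro Bochner_Integration.integrable_sum) (use aFi comp_int(2) in auto)
  have A2i: "integrable (Om J) (\<lambda>zs. As N a zs * (c + Bs N zs))"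
  proof -
    have eq: "As N a zs * (c + Bs N zs) = c * As N a zs + (\<Sum>j\<in>J. \<Sum>k\<in>J. aF (zs j) * w (zs k))" for zs
      unfolding As_J Bs_J by (simp add: algebra_simps sum_product)
    show ?thesis unfolding eq by (auto intro!: Bochner_Integration.integrable_sum pint Ai)
  qed
  have low: "(\<integral>zs. As N a zs * (2 / K - (c + Bs N zs) / K^2) \<partial>Om J) \<le> (\<integral>zs. As N a zs / (c + Bs N zs) \<partial>Om J)"
  proof (rule integral_mono)
    show "integrable (Om J) (\<lambda>zs. As N a zs / (c + Bs N zs))"
      unfolding c_def J_def by (rule frac_int[OF pa])
    show "integrable (Om J) (\<lambda>zs. As N a zs * (2 / K - (c + Bs N zs) / K\<^sup>2))"
      using Ai A2i by (simp add: right_diff_distrib times_divide_eq_right)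
    show "As N a zs * (2 / K - (c + Bs N zs) / K\<^sup>2) \<le> As N a zs / (c + Bs N zs)" for zs
      using c_pos Bs_nn[of N zs] K_pos As_nn[of N a zs] by (intro tangent) auto
  qed
  have "(\<integral>zs. As N a zs * (2 / K - (c + Bs N zs) / K^2) \<partial>Om J)
      = 2 / K * (\<integral>zs. As N a zs \<partial>Om J) - (\<integral>zs. As N a zs * (c + Bs N zs) \<partial>Om J) / K^2"
  proof -
    have "(\<lambda>zs. As N a zs * (2 / K - (c + Bs N zs) / K^2)) = (\<lambda>zs. 2 / K * As N a zs - As N a zs * (c + Bs N zs) / K^2)"
      by (auto simp: algebra_simps)
    then show ?thesis using Ai A2i by simp
  qed
  also have "\<dots> \<ge> 2 / K * (real (N - 1) * (1 - \<pi>)) - real (N - 1) * (1 - \<pi>) * K / K^2"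
    using E1 E2 K_pos by (simp add: divide_right_mono)
  finally have T: "2 / K * (real (N - 1) * (1 - \<pi>)) - real (N - 1) * (1 - \<pi>) * K / K^2
      \<le> (\<integral>zs. As N a zs * (2 / K - (c + Bs N zs) / K^2) \<partial>Om J)" .
  have V: "2 / K * (real (N - 1) * (1 - \<pi>)) - real (N - 1) * (1 - \<pi>) * K / K^2 = real (N - 1) * (1 - \<pi>) / K"
    using K_pos by (simp add: power2_eq_square field_simps)
  have "real (N - 1) * (1 - \<pi>) / K \<le> (\<integral>zs. As N a zs / (c + Bs N zs) \<partial>Om J)"
    using T low unfolding V by linarith
  then have "PN M p q N a {a} \<le> 1 - real (N - 1) * (1 - \<pi>) / K"
    using PN_As[OF pa N] by (simp add: J_def c_def)
  also have "1 - real (N - 1) * (1 - \<pi>) / K = \<pi> + (1 - \<pi>) * (2 * h - 1) / K"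
    using K_pos N by (simp add: field_simps K_def of_nat_diff)
  finally show ?thesis by (simp add: \<pi>_def K_def)
qed

end
context isir begin

definition sw :: "nat \<Rightarrow> nat \<Rightarrow> nat" where
  "sw k n = (if n = 1 then k else if n = k then 1 else n)"

lemma sw_in: "k \<in> {1..N} \<Longrightarrow> n \<in> {1..N} \<Longrightarrow> sw k n \<in> {1..N}"
  by (auto simp: sw_def)

lemma sw_inv: "sw k (sw k n) = n"
  by (simp add: sw_def)

lemma sw_bij: "k \<in> {1..N} \<Longrightarrow> bij_betw (sw k) {1..N} {1..N}"
proof -
  assume k: "k \<in> {1..N}"
  have "sw k ` {1..N} \<subseteq> {1..N}" using sw_in[OF k] by blast
  then show ?thesis by (intro bij_betw_byWitness[where f'="sw k"]) (auto simp: sw_inv)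
qed

lemma sum_sw: "k \<in> {1..N} \<Longrightarrow> (\<Sum>i\<in>{1..N}. h (sw k i)) = (\<Sum>i\<in>{1..N}. (h i :: real))"
  by (rule sum.reindex_bij_betw[OF sw_bij])

lemma G_meas[measurable]: "G N {a} \<in> borel_measurable (Om {1..N})"
  unfolding G_St[abs_def] by measurable

lemma sym_integral:
  fixes g :: "(nat \<Rightarrow> 'a) \<Rightarrow> real"
  assumes k: "k \<in> {1..N}" and g: "g \<in> borel_measurable (Om {1..N})"
  shows "(\<integral>y. g y \<partial>Om {1..N}) = (\<integral>y. g (\<lambda>n\<in>{1..N}. y (sw k n)) \<partial>Om {1..N})"
proof -
  let ?I = "{1..N}"
  have D: "distr (Om ?I) (Om ?I) (\<lambda>\<omega>. \<lambda>n\<in>?I. \<omega> (sw k n)) = Om ?I"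
    using distr_PiM_reindex[of ?I "\<lambda>_. Q" "sw k" ?I] sw_bij[OF k] prob_Q
    by (simp add: bij_betw_def bij_betw_imp_funcset)
  have T: "(\<lambda>\<omega>. \<lambda>n\<in>?I. \<omega> (sw k n)) \<in> measurable (Om ?I) (Om ?I)"
  proof (rule measurable_restrict)
    fix i assume "i \<in> ?I"
    then have "sw k i \<in> ?I" using bij_betwE[OF sw_bij[OF k]] by blast
    then show "(\<lambda>\<omega>. \<omega> (sw k i)) \<in> measurable (Om ?I) Q"
      by (rule measurable_component_singleton)
  qed
  have "(\<integral>y. g y \<partial>Om ?I) = (\<integral>y. g y \<partial>distr (Om ?I) (Om ?I) (\<lambda>\<omega>. \<lambda>n\<in>?I. \<omega> (sw k n)))"
    by (simp only: D)
  also have "\<dots> = (\<integral>y. g (\<lambda>n\<in>?I. y (sw k n)) \<partial>Om ?I)"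
    by (rule integral_distr[OF T g])
  finally show ?thesis .
qed

lemma St_sw: "k \<in> {1..N} \<Longrightarrow> St N a (\<lambda>n\<in>{1..N}. y (sw k n)) = St N a y"
proof -
  assume k: "k \<in> {1..N}"
  have "St N a (\<lambda>n\<in>{1..N}. y (sw k n)) = (\<Sum>i\<in>{1..N}. w (y (sw k i)) * indicator {a} (y (sw k i)))"
    unfolding St_def by (rule sum.cong) auto
  also have "\<dots> = St N a y" unfolding St_def by (rule sum_sw[OF k])
  finally show ?thesis .
qed

lemma Wt_sw: "k \<in> {1..N} \<Longrightarrow> Wt N (\<lambda>n\<in>{1..N}. y (sw k n)) = Wt N y"
proof -
  assume k: "k \<in> {1..N}"
  have "Wt N (\<lambda>n\<in>{1..N}. y (sw k n)) = (\<Sum>i\<in>{1..N}. w (y (sw k i)))"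
    unfolding Wt_def by (rule sum.cong) auto
  also have "\<dots> = Wt N y" unfolding Wt_def by (rule sum_sw[OF k])
  finally show ?thesis .
qed

lemma cs_ineq: "0 \<le> (s::real) \<Longrightarrow> s \<le> W \<Longrightarrow> 2 * r * s - r^2 * W \<le> s^2 / W"
proof (cases "W = 0")
  case True
  assume "0 \<le> s" "s \<le> W" then show ?thesis using True by simp
next
  case False
  assume s: "0 \<le> s" "s \<le> W"
  then have W: "W > 0" using False by simp
  have "s^2 - (2 * r * s - r^2 * W) * W = (s - r * W)^2" by (simp add: power2_eq_square algebra_simps)
  then have "(2 * r * s - r^2 * W) * W \<le> s^2" by (smt (verit) zero_le_power2)
  then show ?thesis using W by (simp add: field_simps)
qed


end
context isir begin
lemma PN_gt:
  assumes pa: "p a > 0" and N: "2 \<le> N"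
  shows "pix a < PN M p q N a {a}"
proof (cases "pix a = 0")
  case True
  interpret O: prob_space "Om {2..N}" by (rule prob_Om)
  have "(\<integral>zs. 0 \<partial>Om {2..N}) < (\<integral>zs. (w a + Cs N a zs) / (w a + Bs N zs) \<partial>Om {2..N})"
  proof (rule O.integral_less_AE_space)
    show "AE x in Om {2..N}. 0 < (w a + Cs N a x) / (w a + Bs N x)"
      using w_pos[OF pa] Cs_nn Bs_nn by (intro AE_I2) (simp add: add_pos_nonneg)
  qed (auto simp: PN_int O.emeasure_space_1)
  then show ?thesis using True N by (simp add: PN_diag)
next
  case False
  let ?I = "{1..N}"
  define \<pi> where "\<pi> = pix a"
  define c where "c = w a"
  define PNa where "PNa = PN M p q N a {a}"
  interpret O: prob_space "Om ?I" by (rule prob_Om)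
  have pi_pos: "\<pi> > 0" using False pix_nn[of a] by (simp add: \<pi>_def)
  have pi_lt: "\<pi> < 1" using pix_lt1 by (simp add: \<pi>_def)
  have c_pos: "c > 0" using w_pos[OF pa] by (simp add: c_def)
  have finI: "finite ?I" by simp
  define g where "g k y = w (y k) * indicator {a} (y k) * G N {a} y" for k y
  have g_meas: "g k \<in> borel_measurable (Om ?I)" if "k \<in> ?I" for k
    unfolding g_def using that
    by (intro borel_measurable_times comp_meas G_meas) (auto intro: borel_measurable_indicator sing)
  have g_bnd: "\<bar>g k y\<bar> \<le> c" for k y
  proof (cases "y k = a")
    case True
    then have "\<bar>g k y\<bar> = c * G N {a} y" using G_bounds[of N a y] c_pos by (simp add: g_def c_def abs_mult)
    also have "\<dots> \<le> c * 1" using G_bounds[of N a y] c_pos by (intro mult_left_mono) auto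
    finally show ?thesis by simp
  qed (use c_pos in \<open>simp add: g_def\<close>)
  have g_int: "integrable (Om ?I) (g k)" if "k \<in> ?I" for k
    by (rule bnd_int[OF g_meas[OF that] g_bnd])
  have L1: "(\<integral>y. g 1 y \<partial>Om ?I) = \<pi> * PNa"
  proof -
    have ins: "?I = insert 1 {2..N}" using N by auto
    have "(\<integral>y. g 1 y \<partial>Om ?I) = (\<integral>y. g 1 y \<partial>Om (insert 1 {2..N}))" by (simp only: ins)
    also have "\<dots> = (\<integral>zs. (\<integral>z. g 1 (zs(1:=z)) \<partial>Q) \<partial>Om {2..N})"
      by (rule Qps.product_integral_insert) (use g_int[of 1] N ins in auto)
    also have "\<dots> = (\<integral>zs. \<pi> * G N {a} (zs(1:=a)) \<partial>Om {2..N})"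
    proof (rule Bochner_Integration.integral_cong[OF refl])
      fix zs
      have "(\<integral>z. g 1 (zs(1:=z)) \<partial>Q) = (\<integral>z. w z * (indicator {a} z * G N {a} (zs(1:=a))) \<partial>Q)"
        by (rule Bochner_Integration.integral_cong) (auto simp: g_def indicator_def)
      also have "\<dots> = (\<integral>z. indicator {a} z * G N {a} (zs(1:=a)) \<partial>Pm)"
        by (rule Wr) (auto intro: borel_measurable_indicator sing)
      also have "\<dots> = \<pi> * G N {a} (zs(1:=a))" by (simp add: \<pi>_def pix_def)
      finally show "(\<integral>z. g 1 (zs(1:=z)) \<partial>Q) = \<pi> * G N {a} (zs(1:=a))" .
    qed
    also have "\<dots> = \<pi> * PNa" using N by (simp add: PNa_def PN_eq)
    finally show ?thesis .
  qed
  have L2: "(\<integral>y. g k y \<partial>Om ?I) = \<pi> * PNa" if k: "k \<in> ?I" for k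
  proof -
    have "(\<integral>y. g 1 y \<partial>Om ?I) = (\<integral>y. g 1 (\<lambda>n\<in>?I. y (sw k n)) \<partial>Om ?I)"
      by (rule sym_integral[OF k g_meas]) (use N in auto)
    also have "\<dots> = (\<integral>y. g k y \<partial>Om ?I)"
    proof (rule Bochner_Integration.integral_cong[OF refl])
      fix y
      have "sw k 1 = k" by (simp add: sw_def)
      moreover have "1 \<in> ?I" using N by simp
      ultimately show "g 1 (\<lambda>n\<in>?I. y (sw k n)) = g k y"
        unfolding g_def G_St using St_sw[OF k] Wt_sw[OF k] by simp
    qed
    finally show ?thesis using L1 by simp
  qed
  have Ysum: "St N a y ^ 2 / Wt N y = (\<Sum>k\<in>?I. g k y)" for y
  proof -
    have "(\<Sum>k\<in>?I. g k y) = (\<Sum>k\<in>?I. w (y k) * indicator {a} (y k)) * G N {a} y"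
      unfolding g_def by (simp only: sum_distrib_right)
    also have "\<dots> = St N a y * (St N a y / Wt N y)" by (simp only: St_def G_St)
    finally show ?thesis by (simp add: power2_eq_square)
  qed
  have Yint: "(\<integral>y. St N a y ^ 2 / Wt N y \<partial>Om ?I) = real N * (\<pi> * PNa)"
  proof -
    have "(\<integral>y. St N a y ^ 2 / Wt N y \<partial>Om ?I) = (\<Sum>k\<in>?I. (\<integral>y. g k y \<partial>Om ?I))"
      unfolding Ysum by (rule Bochner_Integration.integral_sum) (rule g_int)
    also have "\<dots> = (\<Sum>k\<in>?I. \<pi> * PNa)" by (rule sum.cong[OF refl L2])
    finally show ?thesis by simp
  qed
  have wi: "integrable Q (\<lambda>z. w z * indicator {a} z)"
    by (subst Wr_int) (auto intro!: Pp.integrable_const_bound[where B=1] borel_measurable_indicator sing)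
  have Sti: "integrable (Om ?I) (St N a)"
    unfolding St_def[abs_def]
    by (intro Bochner_Integration.integrable_sum) (use comp_int(2)[of _ ?I "\<lambda>z. w z * indicator {a} z"] wi in \<open>auto intro: borel_measurable_indicator sing\<close>)
  have Wti: "integrable (Om ?I) (Wt N)"
    unfolding Wt_def[abs_def]
    by (intro Bochner_Integration.integrable_sum) (use comp_int(2)[of _ ?I w] w_int in auto)
  have ESt: "(\<integral>y. St N a y \<partial>Om ?I) = real N * \<pi>"
  proof -
    have "(\<integral>y. St N a y \<partial>Om ?I) = (\<Sum>k\<in>?I. (\<integral>y. w (y k) * indicator {a} (y k) \<partial>Om ?I))"
      unfolding St_def by (rule Bochner_Integration.integral_sum)
        (use comp_int(2)[of _ ?I "\<lambda>z. w z * indicator {a} z"] wi in \<open>auto intro: borel_measurable_indicator sing\<close>)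
    also have "\<dots> = (\<Sum>k\<in>?I. \<pi>)"
      by (rule sum.cong[OF refl]) (subst comp_int(1)[of _ ?I "\<lambda>z. w z * indicator {a} z"], auto intro: borel_measurable_indicator sing simp: pix_w \<pi>_def)
    finally show ?thesis by simp
  qed
  have EWt: "(\<integral>y. Wt N y \<partial>Om ?I) = real N"
  proof -
    have "(\<integral>y. Wt N y \<partial>Om ?I) = (\<Sum>k\<in>?I. (\<integral>y. w (y k) \<partial>Om ?I))"
      unfolding Wt_def by (rule Bochner_Integration.integral_sum) (use comp_int(2)[of _ ?I w] w_int in auto)
    also have "\<dots> = (\<Sum>k\<in>?I. 1)"
      by (rule sum.cong[OF refl]) (subst comp_int(1)[of _ ?I w], auto simp: w_int1)
    finally show ?thesis by simp
  qed
  define A where "A = (\<Pi>\<^sub>E i\<in>?I. {a})"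
  have Asets: "A \<in> sets (Om ?I)" unfolding A_def by (rule sets_PiM_I_finite) auto
  have Qa: "measure Q {a} > 0"
    using pi_pos pix_eq[of a] c_pos measure_nonneg[of Q "{a}"] by (simp add: \<pi>_def c_def zero_less_mult_iff)
  have eA: "emeasure (Om ?I) A \<noteq> 0"
  proof -
    have "emeasure (Om ?I) A = (\<Prod>i\<in>?I. emeasure Q {a})"
      unfolding A_def by (rule Qps.emeasure_PiM) auto
    also have "\<dots> \<noteq> 0" using Qa by (simp add: Qp.emeasure_eq_measure)
    finally show ?thesis .
  qed
  have Yi: "integrable (Om ?I) (\<lambda>y. St N a y ^ 2 / Wt N y)"
  proof (rule Bochner_Integration.integrable_bound[OF Sti])
    show "(\<lambda>y. St N a y ^ 2 / Wt N y) \<in> borel_measurable (Om ?I)" by measurable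
    show "AE y in Om ?I. norm (St N a y ^ 2 / Wt N y) \<le> norm (St N a y)"
    proof (intro AE_I2)
      fix y
      have "St N a y ^ 2 / Wt N y = St N a y * (St N a y / Wt N y)" by (simp add: power2_eq_square)
      also have "\<dots> \<le> St N a y * 1" using St_nn St_le by (intro mult_left_mono frac01) auto
      finally show "norm (St N a y ^ 2 / Wt N y) \<le> norm (St N a y)"
        using St_nn[of N a y] Wt_nn[of N y] by simp
    qed
  qed
  have "(\<integral>y. 2 * \<pi> * St N a y - \<pi>^2 * Wt N y \<partial>Om ?I) < (\<integral>y. St N a y ^ 2 / Wt N y \<partial>Om ?I)"
  proof (rule O.integral_less_AE[OF _ Yi eA Asets])
    show "integrable (Om ?I) (\<lambda>y. 2 * \<pi> * St N a y - \<pi>\<^sup>2 * Wt N y)" using Sti Wti by simp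
    show "AE y in Om ?I. 2 * \<pi> * St N a y - \<pi>\<^sup>2 * Wt N y \<le> St N a y ^ 2 / Wt N y"
      using St_nn St_le by (intro AE_I2 cs_ineq)
    show "AE y in Om ?I. y \<in> A \<longrightarrow> 2 * \<pi> * St N a y - \<pi>\<^sup>2 * Wt N y \<noteq> St N a y ^ 2 / Wt N y"
    proof (intro AE_I2 impI)
      fix y assume y: "y \<in> A"
      have "St N a y = real N * c" unfolding St_def c_def using y by (simp add: A_def PiE_iff)
      moreover have "Wt N y = real N * c" unfolding Wt_def c_def using y by (simp add: A_def PiE_iff)
      moreover have "real N * c > 0" using c_pos N by simp
      moreover have "(1 - \<pi>)^2 > 0" using pi_lt by simp
      ultimately show "2 * \<pi> * St N a y - \<pi>\<^sup>2 * Wt N y \<noteq> St N a y ^ 2 / Wt N y"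
      proof -
        assume St: "St N a y = real N * c" and Wt: "Wt N y = real N * c" and Nc: "real N * c > 0"
          and pp: "(1 - \<pi>)^2 > 0"
        have "St N a y ^ 2 / Wt N y - (2 * \<pi> * St N a y - \<pi>\<^sup>2 * Wt N y) = real N * c * (1 - \<pi>)^2"
          unfolding St Wt using Nc by (simp add: power2_eq_square field_simps)
        also have "\<dots> > 0" using Nc pp by simp
        finally show ?thesis by simp
      qed
    qed
  qed
  then have "2 * \<pi> * (real N * \<pi>) - \<pi>^2 * real N < real N * (\<pi> * PNa)"
    using Sti Wti ESt EWt Yint by (simp add: One_nat_def)
  then have "real N * (\<pi> * \<pi>) < real N * (\<pi> * PNa)" by (simp add: power2_eq_square algebra_simps)
  then have "\<pi> * \<pi> < \<pi> * PNa" using N by simp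
  then show ?thesis using pi_pos by (simp add: \<pi>_def PNa_def)
qed

end
context isir begin

lemma pix_meas[measurable]: "pix \<in> borel_measurable M"
proof (rule measurable_discrete_difference[where f="\<lambda>_. 0" and X="{y. measure Pm {y} \<noteq> 0}"])
  show "countable {y. measure Pm {y} \<noteq> 0}" by (rule Pp.countable_support)
qed (auto simp: pix_def sing)

lemma PN_meas: "1 \<le> N \<Longrightarrow> (\<lambda>y. PN M p q N y {y}) \<in> borel_measurable M"
proof (cases "N = 1")
  case True then show ?thesis by (simp add: PN_def)
next
  case False
  assume "1 \<le> N"
  with False have N: "2 \<le> N" by simp
  let ?J = "{2..N}"
  interpret O: prob_space "Om ?J" by (rule prob_Om)
  define f where "f y = (\<integral>zs. w y / (w y + Bs N zs) \<partial>Om ?J)" for y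
  have fm: "f \<in> borel_measurable M"
    unfolding f_def
  proof (rule O.borel_measurable_lebesgue_integral)
    show "(\<lambda>(y, zs). w y / (w y + Bs N zs)) \<in> borel_measurable (M \<Otimes>\<^sub>M Om ?J)"
      by measurable
  qed
  show ?thesis
  proof (rule measurable_discrete_difference[OF fm Qp.countable_support])
    fix y assume "y \<notin> {y. measure Q {y} \<noteq> 0}"
    then have Qy: "measure Q {y} = 0" by simp
    have "{y} \<in> null_sets Q" using Qy by (simp add: Qp.emeasure_eq_measure null_sets_def)
    then have ae: "AE z in Q. z \<noteq> y" using AE_not_in by fastforce
    have "AE zs in Om ?J. \<forall>j\<in>?J. zs j \<noteq> y"
    proof (rule AE_finite_allI)
      fix j assume "j \<in> ?J"
      then show "AE zs in Om ?J. zs j \<noteq> y"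
        using AE_PiM_component[of ?J "\<lambda>_. Q" j "\<lambda>z. z \<noteq> y"] prob_Q ae by simp
    qed simp
    then have "AE zs in Om ?J. w y / (w y + Bs N zs) = (w y + Cs N y zs) / (w y + Bs N zs)"
    proof eventually_elim
      case (elim zs)
      then have "Cs N y zs = 0" unfolding Cs_def by (intro sum.neutral) auto
      then show ?case by simp
    qed
    then have "f y = (\<integral>zs. (w y + Cs N y zs) / (w y + Bs N zs) \<partial>Om ?J)"
      unfolding f_def by (intro integral_cong_AE) auto
    then show "f y = PN M p q N y {y}" using N by (simp add: PN_diag)
  qed (auto simp: sing)
qed

end
lemma interp_ineq:
  fixes a u t :: real
  assumes a: "1 \<le> a" and u: "a \<le> u" and t: "0 \<le> t" "t < 1"
  shows "(1 - t) * (a / u) + t * (a / (u + 1)) \<le> (a + 1) / (u + 1 + t)"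
proof -
  have u0: "u > 0" using a u by simp
  have lhs: "(1 - t) * (a / u) + t * (a / (u + 1)) = a * (u + 1 - t) / (u * (u + 1))"
    using u0 by (simp add: field_simps)
  have key: "a * (u + 1 - t) * (u + 1 + t) \<le> (a + 1) * (u * (u + 1))"
  proof -
    have "(a + 1) * (u * (u + 1)) - a * (u + 1 - t) * (u + 1 + t) = (u + 1) * (u - a) + a * t^2"
      by (simp add: algebra_simps power2_eq_square)
    also have "\<dots> \<ge> 0" using u0 u a by (intro add_nonneg_nonneg mult_nonneg_nonneg) auto
    finally show ?thesis by simp
  qed
  have "a * (u + 1 - t) / (u * (u + 1)) \<le> (a + 1) / (u + 1 + t)"
    using key u0 t by (simp add: divide_simps mult.commute mult.left_commute)
  then show ?thesis using lhs by simp
qed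

context isir begin

definition nl :: "real \<Rightarrow> nat" where "nl lam = nat \<lfloor>lam\<rfloor>"
definition bl :: "real \<Rightarrow> real" where "bl lam = real (nl lam) + 1 - lam"

lemma Plam_eq: "Plam M p q lam y A = bl lam * PN M p q (nl lam) y A + (1 - bl lam) * PN M p q (nl lam + 1) y A"
  unfolding Plam_def nl_def bl_def Let_def ..

lemma nl_bl: assumes "1 \<le> lam"
  shows "1 \<le> nl lam" "0 < bl lam" "bl lam \<le> 1" "real (nl lam) + 1 - bl lam = lam"
proof -
  have f1: "1 \<le> \<lfloor>lam\<rfloor>" using assms by linarith
  then have e: "real (nl lam) = of_int \<lfloor>lam\<rfloor>" by (simp add: nl_def)
  show "1 \<le> nl lam" using f1 by (simp add: nl_def le_nat_iff)
  show "0 < bl lam" using e by (simp add: bl_def)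
  show "bl lam \<le> 1" using e by (simp add: bl_def)
  show "real (nl lam) + 1 - bl lam = lam" by (simp add: bl_def)
qed

lemma Plam_meas: "1 \<le> lam \<Longrightarrow> (\<lambda>y. Plam M p q lam y {y}) \<in> borel_measurable M"
  unfolding Plam_eq using nl_bl(1) by (intro borel_measurable_add borel_measurable_times PN_meas borel_measurable_const) auto

lemma Plam_bounds: assumes "1 \<le> lam" shows "0 \<le> Plam M p q lam y {y}" "Plam M p q lam y {y} \<le> 1"
proof -
  have b: "0 < bl lam" "bl lam \<le> 1" using nl_bl assms by auto
  show "0 \<le> Plam M p q lam y {y}" unfolding Plam_eq using b PN_bounds
    by (intro add_nonneg_nonneg mult_nonneg_nonneg) auto
  have "Plam M p q lam y {y} \<le> bl lam * 1 + (1 - bl lam) * 1" unfolding Plam_eq using b PN_bounds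
    by (intro add_mono mult_left_mono) auto
  then show "Plam M p q lam y {y} \<le> 1" by simp
qed

lemma PN_gt': "p a > 0 \<Longrightarrow> 1 \<le> N \<Longrightarrow> pix a < PN M p q N a {a}"
  using PN_gt[of a N] pix_lt1[of a] by (cases "N = 1") (auto simp: PN_def)

lemma Plam_gt: assumes pa: "p a > 0" and lam: "1 \<le> lam" shows "pix a < Plam M p q lam a {a}"
proof -
  have b: "0 < bl lam" "bl lam \<le> 1" "1 \<le> nl lam" using nl_bl lam by auto
  have "pix a = bl lam * pix a + (1 - bl lam) * pix a" by (simp add: algebra_simps)
  also have "\<dots> < bl lam * PN M p q (nl lam) a {a} + (1 - bl lam) * PN M p q (nl lam + 1) a {a}"
    using b PN_gt'[OF pa, of "nl lam"] PN_gt'[OF pa, of "nl lam + 1"]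
    by (intro add_less_le_mono mult_strict_left_mono mult_left_mono) auto
  finally show ?thesis by (simp add: Plam_eq)
qed

lemma Plam_lt1: assumes pa: "p a > 0" and lam: "1 < lam" shows "Plam M p q lam a {a} < 1"
proof -
  have b: "0 < bl lam" "bl lam \<le> 1" "1 \<le> nl lam" "real (nl lam) + 1 - bl lam = lam" using nl_bl lam by auto
  show ?thesis
  proof (cases "nl lam = 1")
    case True
    then have "bl lam < 1" using b lam by simp
    moreover have "PN M p q 2 a {a} < 1" by (rule PN_lt1[OF pa]) simp
    ultimately have "bl lam * 1 + (1 - bl lam) * PN M p q 2 a {a} < bl lam * 1 + (1 - bl lam) * 1"
      by (intro add_strict_left_mono mult_strict_left_mono) auto
    then show ?thesis using True by (simp add: Plam_eq PN_def numeral_2_eq_2)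
  next
    case False
    then have n2: "2 \<le> nl lam" using b by simp
    have "Plam M p q lam a {a} < bl lam * 1 + (1 - bl lam) * 1" unfolding Plam_eq
      using b PN_lt1[OF pa n2] PN_lt1[OF pa, of "nl lam + 1"] n2
      by (intro add_less_le_mono mult_strict_left_mono mult_left_mono) auto
    then show ?thesis by simp
  qed
qed

lemma PN_upper':
  assumes pa: "p a > 0" and N: "1 \<le> N" and hb: "\<And>y. w y \<le> h" and h1: "1 \<le> h"
  shows "PN M p q N a {a} - pix a \<le> (1 - pix a) * ((2 * h - 1) / (2 * h + real N - 2))"
proof (cases "N = 1")
  case True
  then show ?thesis using h1 by (simp add: PN_def)
next
  case False
  then show ?thesis using PN_upper[OF pa _ hb] N by simp
qed

lemma Plam_upper:
  assumes pa: "p a > 0" and lam: "1 \<le> lam" and hb: "\<And>y. w y \<le> h" and h1: "1 \<le> h"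
  shows "Plam M p q lam a {a} \<le> pix a + (1 - pix a) * (2 * h / (2 * h + lam - 1))"
proof -
  have b: "0 < bl lam" "bl lam \<le> 1" "1 \<le> nl lam" "real (nl lam) + 1 - bl lam = lam" using nl_bl lam by auto
  define n where "n = nl lam"
  define t where "t = 1 - bl lam"
  define u where "u = 2 * h + real n - 2"
  have pi1: "0 \<le> 1 - pix a" using pix_lt1[of a] by simp
  have "Plam M p q lam a {a} - pix a = bl lam * (PN M p q n a {a} - pix a) + (1 - bl lam) * (PN M p q (n+1) a {a} - pix a)"
    by (simp add: Plam_eq n_def algebra_simps)
  also have "\<dots> \<le> bl lam * ((1 - pix a) * ((2 * h - 1) / (2 * h + real n - 2)))
      + (1 - bl lam) * ((1 - pix a) * ((2 * h - 1) / (2 * h + real (n+1) - 2)))"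
    using b by (intro add_mono mult_left_mono PN_upper'[OF pa _ hb h1]) (auto simp: n_def)
  also have "\<dots> = (1 - pix a) * ((1 - t) * ((2 * h - 1) / u) + t * ((2 * h - 1) / (u + 1)))"
    by (simp add: t_def u_def algebra_simps)
  also have "\<dots> \<le> (1 - pix a) * ((2 * h - 1 + 1) / (u + 1 + t))"
    using b h1 pi1 by (intro mult_left_mono interp_ineq) (auto simp: t_def u_def n_def)
  also have "(2 * h - 1 + 1) / (u + 1 + t) = 2 * h / (2 * h + lam - 1)"
    using b by (simp add: u_def t_def n_def algebra_simps)
  finally show ?thesis by simp
qed

lemma Pm1[simp]: "measure Pm UNIV = 1"
  using Pp.prob_space by simp

lemma Pm_e1[simp]: "emeasure Pm UNIV = 1"
  using Pp.emeasure_space_1 by simp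

lemma AE_S: "AE y in Pm. p y > 0"
  unfolding dens_def by (subst AE_density) auto

lemma toPm: "f \<in> borel_measurable M \<Longrightarrow> f \<in> borel_measurable Pm"
  using measurable_cong_sets[OF sets_Pm refl] by blast

lemma setint_S: fixes f :: "'a \<Rightarrow> real" assumes f: "f \<in> borel_measurable M"
  shows "(\<integral>y\<in>S. f y \<partial>Pm) = (\<integral>y. f y \<partial>Pm)"
  unfolding set_lebesgue_integral_def
proof (rule integral_cong_AE)
  show "AE x in Pm. indicator S x *\<^sub>R f x = f x" using AE_S by eventually_elim (simp add: indicator_def)
qed (use toPm[OF f] in auto)

end
theorem lemma8p4:
  fixes M :: "'a measure" and p q :: "'a \<Rightarrow> real" and x :: 'a and lam :: real
  assumes sf: "sigma_finite_measure M"
    and sing: "\<And>y. {y} \<in> sets M"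
    and p_meas: "p \<in> borel_measurable M" and q_meas: "q \<in> borel_measurable M"
    and p_nn: "\<And>y. p y \<ge> 0" and q_nn: "\<And>y. q y \<ge> 0"
    and p_int: "(\<integral>\<^sup>+ y. ennreal (p y) \<partial>M) = 1"
    and q_int: "(\<integral>\<^sup>+ y. ennreal (q y) \<partial>M) = 1"
    and q_pos: "\<And>y. p y > 0 \<Longrightarrow> q y > 0"
    and nondeg: "\<And>a. measure (dens M p) ({y. p y > 0} - {a}) > 0"
    and x_in: "p x > 0"
    and lam: "lam \<ge> 1"
  defines "I0 \<equiv> (\<integral>y\<in>{y. p y > 0}. measure (dens M p) {y} \<partial>(dens M p))"
    and "I \<equiv> (\<integral>y\<in>{y. p y > 0}. Plam M p q lam y {y} \<partial>(dens M p))"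
    and "\<psi> \<equiv> ((\<integral>y\<in>{y. p y > 0}. (Plam M p q lam y {y} - measure (dens M p) {y}) \<partial>(dens M p)) / (1 - (\<integral>y\<in>{y. p y > 0}. measure (dens M p) {y} \<partial>(dens M p))))"
    and "wh \<equiv> (SUP y. iw p q y)"
  shows "measure (dens M p) {x} < Plam M p q lam x {x}
    \<and> I0 < I
    \<and> 0 < \<psi>
    \<and> (lam > 1 \<longrightarrow> 1 < (1 + \<psi>) / (1 - \<psi>))
    \<and> (bdd_above (range (iw p q)) \<longrightarrow>
          Plam M p q lam x {x} \<le> measure (dens M p) {x} + (1 - measure (dens M p) {x}) * (2 * wh / (2 * wh + lam - 1))
        \<and> I \<le> I0 + (1 - I0) * (2 * wh / (2 * wh + lam - 1))
        \<and> \<psi> \<le> 2 * wh / (2 * wh + lam - 1)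
        \<and> (lam > 1 \<longrightarrow> (1 + \<psi>) / (1 - \<psi>) \<le> (4 * wh + lam - 1) / (lam - 1)))"
proof -
  interpret isir M p q
    using sing p_meas q_meas p_nn q_nn p_int q_int q_pos nondeg by unfold_locales auto
  define F where "F y = Plam M p q lam y {y}" for y
  have Fm: "F \<in> borel_measurable M" unfolding F_def by (rule Plam_meas[OF lam])
  have F01: "0 \<le> F y" "F y \<le> 1" for y unfolding F_def using Plam_bounds[OF lam] by auto
  have Fi: "integrable Pm F"
    by (rule Pp.integrable_const_bound[where B=1]) (use F01 toPm[OF Fm] in auto)
  have pii: "integrable Pm pix"
    by (rule Pp.integrable_const_bound[where B=1]) (use pix_nn pix_lt1 toPm[OF pix_meas] in \<open>auto intro!: AE_I2 simp: abs_le_iff less_imp_le\<close>)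
  have I0e: "I0 = (\<integral>y. pix y \<partial>Pm)"
    unfolding I0_def pix_def[symmetric] by (rule setint_S[OF pix_meas])
  have Ie: "I = (\<integral>y. F y \<partial>Pm)"
    unfolding I_def F_def[symmetric] by (rule setint_S[OF Fm])
  have num: "(\<integral>y\<in>{y. p y > 0}. (Plam M p q lam y {y} - measure (dens M p) {y}) \<partial>(dens M p)) = I - I0"
  proof -
    have "(\<integral>y\<in>{y. p y > 0}. (Plam M p q lam y {y} - measure (dens M p) {y}) \<partial>(dens M p))
        = (\<integral>y\<in>S. (F y - pix y) \<partial>Pm)" by (simp add: F_def pix_def)
    also have "\<dots> = (\<integral>y. F y - pix y \<partial>Pm)" by (rule setint_S) (use Fm pix_meas in measurable)
    also have "\<dots> = I - I0" using Fi pii by (simp add: I0e Ie)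
    finally show ?thesis .
  qed
  have psie: "\<psi> = (I - I0) / (1 - I0)"
    unfolding \<psi>_def num I0_def[symmetric] ..
  have I0lt: "I0 < 1"
  proof -
    have "(\<integral>y. pix y \<partial>Pm) < (\<integral>y. 1 \<partial>Pm)"
      by (rule Pp.integral_less_AE_space) (use pii pix_lt1 Pp.emeasure_space_1 in auto)
    then show ?thesis using I0e by simp
  qed
  have I0I: "I0 < I"
  proof -
    have "(\<integral>y. pix y \<partial>Pm) < (\<integral>y. F y \<partial>Pm)"
    proof (rule Pp.integral_less_AE_space[OF pii Fi])
      show "AE x in Pm. pix x < F x" using AE_S
        by eventually_elim (simp add: F_def Plam_gt[OF _ lam])
    qed (simp add: Pp.emeasure_space_1)
    then show ?thesis using I0e Ie by simp
  qed
  have psi_pos: "0 < \<psi>" unfolding psie using I0lt I0I by simp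
  have part1: "lam > 1 \<longrightarrow> 1 < (1 + \<psi>) / (1 - \<psi>)"
  proof
    assume l1: "lam > 1"
    have "I < 1"
    proof -
      have "(\<integral>y. F y \<partial>Pm) < (\<integral>y. 1 \<partial>Pm)"
      proof (rule Pp.integral_less_AE_space[OF Fi])
        show "AE x in Pm. F x < 1" using AE_S
          by eventually_elim (simp add: F_def Plam_lt1[OF _ l1])
      qed (auto simp: Pp.emeasure_space_1)
      then show ?thesis using Ie by simp
    qed
    then have "\<psi> < 1" unfolding psie using I0lt by simp
    then show "1 < (1 + \<psi>) / (1 - \<psi>)" using psi_pos by (simp add: field_simps)
  qed
  have part2: "bdd_above (range (iw p q)) \<longrightarrow>
          Plam M p q lam x {x} \<le> measure (dens M p) {x} + (1 - measure (dens M p) {x}) * (2 * wh / (2 * wh + lam - 1))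
        \<and> I \<le> I0 + (1 - I0) * (2 * wh / (2 * wh + lam - 1))
        \<and> \<psi> \<le> 2 * wh / (2 * wh + lam - 1)
        \<and> (lam > 1 \<longrightarrow> (1 + \<psi>) / (1 - \<psi>) \<le> (4 * wh + lam - 1) / (lam - 1))"
  proof
    assume bdd: "bdd_above (range (iw p q))"
    have hb: "w y \<le> wh" for y unfolding wh_def using bdd by (intro cSUP_upper) auto
    have h1: "1 \<le> wh"
    proof -
      have "(\<integral>z. w z \<partial>Q) \<le> (\<integral>z. wh \<partial>Q)" using w_int hb by (intro integral_mono) auto
      then show ?thesis using w_int1 by simp
    qed
    define f where "f = 2 * wh / (2 * wh + lam - 1)"
    have f_lt: "f \<le> 1" using h1 lam by (simp add: f_def)
    have up: "F y \<le> pix y + (1 - pix y) * f" if "p y > 0" for y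
      unfolding F_def f_def by (rule Plam_upper[OF that lam hb h1])
    have A1: "Plam M p q lam x {x} \<le> measure (dens M p) {x} + (1 - measure (dens M p) {x}) * f"
      using up[OF x_in] by (simp add: F_def pix_def)
    have A2: "I \<le> I0 + (1 - I0) * f"
    proof -
      have "(\<integral>y. F y \<partial>Pm) \<le> (\<integral>y. pix y + (1 - pix y) * f \<partial>Pm)"
      proof (rule integral_mono_AE[OF Fi])
        show "integrable Pm (\<lambda>y. pix y + (1 - pix y) * f)" using pii by (simp add: algebra_simps)
        show "AE y in Pm. F y \<le> pix y + (1 - pix y) * f" using AE_S by eventually_elim (rule up)
      qed
      also have "\<dots> = I0 + (1 - I0) * f" using pii by (simp add: I0e algebra_simps Pp.prob_space)
      finally show ?thesis using Ie by simp
    qed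
    have A3: "\<psi> \<le> f" unfolding psie using A2 I0lt by (simp add: divide_le_eq algebra_simps)
    have A4: "lam > 1 \<longrightarrow> (1 + \<psi>) / (1 - \<psi>) \<le> (4 * wh + lam - 1) / (lam - 1)"
    proof
      assume l1: "lam > 1"
      have fl: "f < 1" using h1 l1 by (simp add: f_def)
      have "(1 + \<psi>) / (1 - \<psi>) \<le> (1 + f) / (1 - f)"
        using A3 fl psi_pos by (simp add: divide_simps) (smt (verit) mult_left_mono mult_right_mono)
      also have "(1 + f) / (1 - f) = (4 * wh + lam - 1) / (lam - 1)"
      proof -
        have D: "2 * wh + lam - 1 > 0" using h1 l1 by simp
        have e1: "1 + f = (4 * wh + lam - 1) / (2 * wh + lam - 1)"
          using D by (simp add: f_def field_simps)
        have e2: "1 - f = (lam - 1) / (2 * wh + lam - 1)"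
          using D by (simp add: f_def field_simps)
        show ?thesis unfolding e1 e2 using D by simp
      qed
      finally show "(1 + \<psi>) / (1 - \<psi>) \<le> (4 * wh + lam - 1) / (lam - 1)" .
    qed
    show "Plam M p q lam x {x} \<le> measure (dens M p) {x} + (1 - measure (dens M p) {x}) * (2 * wh / (2 * wh + lam - 1))
        \<and> I \<le> I0 + (1 - I0) * (2 * wh / (2 * wh + lam - 1))
        \<and> \<psi> \<le> 2 * wh / (2 * wh + lam - 1)
        \<and> (lam > 1 \<longrightarrow> (1 + \<psi>) / (1 - \<psi>) \<le> (4 * wh + lam - 1) / (lam - 1))"
      using A1 A2 A3 A4 by (simp add: f_def)
  qed
  have part0: "measure (dens M p) {x} < Plam M p q lam x {x}"
    using Plam_gt[OF x_in lam] by (simp add: pix_def)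
  show ?thesis using part0 I0I psi_pos part1 part2 by blast
qed

end
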